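(* Let $p\in\mathbb{R}^d$, $\epsilon>0$, and $\psi:\mathbb{R}^d\to[0,1]$ be such that every oriented hyperplane $H$ with $B(p,\epsilon)\subseteq H^+$ is a reflecting hyperplane for $\psi$. Then for all $x,y\in\mathbb{R}^d$ with $\|x-p\|-\|y-p\|>2\epsilon$, we have $\psi(x)\le\psi(y)$.
   Context: $B(p,\epsilon)$ is the open Euclidean ball. An oriented hyperplane is $H=\{x:\langle x,u\rangle=a\}$ with $u$ a unit vector, $a\in\mathbb{R}$; $H^-=\{\langle x,u\rangle<a\}$, $H^+=\{\langle x,u\rangle>a\}$, and $x^H=x-2(\langle x,u\rangle-a)u$. $H$ is a reflecting hyperplane for $\psi$ if $\psi(x)\le\psi(x^H)$ for all $x\in H^-$. *)

theory Defs
  imports "HOL-Analysis.Analysis"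
begin

text \<open>An oriented hyperplane H = {x. <x,u> = a} is represented by the pair (u, a) with norm u = 1.\<close>

definition hplus :: "'a::euclidean_space \<Rightarrow> real \<Rightarrow> 'a set" where
  "hplus u a = {x. x \<bullet> u > a}"

definition hminus :: "'a::euclidean_space \<Rightarrow> real \<Rightarrow> 'a set" where
  "hminus u a = {x. x \<bullet> u < a}"

definition hreflect :: "'a::euclidean_space \<Rightarrow> real \<Rightarrow> 'a \<Rightarrow> 'a" where
  "hreflect u a x = x - (2 * (x \<bullet> u - a)) *\<^sub>R u"

definition reflecting_hyperplane :: "('a::euclidean_space \<Rightarrow> real) \<Rightarrow> 'a \<Rightarrow> real \<Rightarrow> bool" where
  "reflecting_hyperplane \<psi> u a \<longleftrightarrow> (\<forall>x \<in> hminus u a. \<psi> x \<le> \<psi> (hreflect u a x))"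

end

theory Submission
  imports Defs
begin

theorem lemma5:
  fixes p :: "'a::euclidean_space" and \<epsilon> :: real and \<psi> :: "'a \<Rightarrow> real"
  assumes "\<epsilon> > 0"
    and "\<And>x. 0 \<le> \<psi> x \<and> \<psi> x \<le> 1"
    and "\<And>u a. norm u = 1 \<Longrightarrow> ball p \<epsilon> \<subseteq> hplus u a \<Longrightarrow> reflecting_hyperplane \<psi> u a"
  shows "\<forall>x y. norm (x - p) - norm (y - p) > 2 * \<epsilon> \<longrightarrow> \<psi> x \<le> \<psi> y"
proof (intro allI impI)
  fix x y :: 'a
  assume h: "norm (x - p) - norm (y - p) > 2 * \<epsilon>"
  have xy: "x \<noteq> y" using h assms(1) by auto
  define d where "d = norm (y - x)"
  have dpos: "d > 0" using xy by (simp add: d_def)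
  define u where "u = (1/d) *\<^sub>R (y - x)"
  define a where "a = (y \<bullet> y - x \<bullet> x) / (2*d)"
  have nu: "norm u = 1" using dpos by (simp add: u_def d_def)
  have key: "z \<bullet> u - a = ((norm (z - x))^2 - (norm (z - y))^2) / (2*d)" for z
  proof -
    have "(norm (z - x))^2 - (norm (z - y))^2 = 2 * (z \<bullet> y) - 2 * (z \<bullet> x) + x \<bullet> x - y \<bullet> y"
      by (simp add: power2_norm_eq_inner inner_diff_left inner_diff_right inner_commute algebra_simps)
    moreover have "z \<bullet> u = (z \<bullet> y - z \<bullet> x) / d"
      by (simp add: u_def inner_diff_right divide_simps)
    ultimately show ?thesis using dpos by (simp add: a_def field_simps)
  qed
  have "ball p \<epsilon> \<subseteq> hplus u a"
  proof
    fix z assume "z \<in> ball p \<epsilon>"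
    hence dz: "norm (z - p) < \<epsilon>" by (simp add: dist_norm norm_minus_commute)
    have "norm (x - p) \<le> norm (z - x) + norm (z - p)"
      using norm_triangle_ineq4[of "z - p" "z - x"] by (simp add: algebra_simps)
    moreover have "norm (z - y) \<le> norm (y - p) + norm (z - p)"
      using norm_triangle_ineq[of "z - p" "p - y"] by (simp add: algebra_simps norm_minus_commute)
    ultimately have "norm (z - y) < norm (z - x)" using h dz by linarith
    hence "(norm (z - y))^2 < (norm (z - x))^2"
      by (simp add: power_strict_mono)
    hence "z \<bullet> u - a > 0" using key[of z] dpos by simp
    thus "z \<in> hplus u a" by (simp add: hplus_def)
  qed
  hence R: "reflecting_hyperplane \<psi> u a" using assms(3) nu by blast
  have xu: "x \<bullet> u - a = - d / 2"
    using key[of x] dpos by (simp add: d_def norm_minus_commute power2_eq_square)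
  have "x \<in> hminus u a" using xu dpos by (simp add: hminus_def)
  moreover have "hreflect u a x = y"
  proof -
    have "hreflect u a x = x - (2 * (- d / 2)) *\<^sub>R u" unfolding hreflect_def using xu by simp
    also have "\<dots> = x + d *\<^sub>R u" by simp
    also have "\<dots> = y" using dpos by (simp add: u_def)
    finally show ?thesis .
  qed
  ultimately show "\<psi> x \<le> \<psi> y" using R by (metis reflecting_hyperplane_def)
qed

end
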